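(* Let $1\le n\le d$ and let $P_1,\dots,P_n$ be real quadratic forms on $\mathbb{R}^d$ such that for every choice of linearly independent $\vec w_1,\dots,\vec w_{d-n}\in\mathbb{R}^d$, $\det[\nabla P_1(t);\dots;\nabla P_n(t);\vec w_1;\dots;\vec w_{d-n}]\not\equiv0$ as a polynomial in $t$. Let $V\subset\mathbb{R}^{d+n}$ be a linear subspace and let integers $H_1,H_2$ satisfy $0\le H_1\le\min(\dim(V\cap S_1),d-n)$ and $0\le H_2\le\dim(V/S_1)$. Then $\dim(\pi_t(V))\ge H_1+H_2$ for all $t\in\mathbb{R}^d$ outside the zero set of some nontrivial polynomial of degree at most $H_2$.
   Context: $S_1=\mathbb{R}^d\times\{0\}\subset\mathbb{R}^{d+n}$, and $\dim(V/S_1)=\dim V-\dim(V\cap S_1)$. For $t\in\mathbb{R}^d$, $V(t)\subset\mathbb{R}^{d+n}$ is the linear subspace spanned by $(e_j,\partial_jP_1(t),\dots,\partial_jP_n(t))$, $j=1,\dots,d$ (tangent space of the graph of $(P_1,\dots,P_n)$), and $\pi_t$ is the orthogonal projection onto $V(t)$. *)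

theory Defs
  imports "HOL-Analysis.Analysis"
begin

definition qform :: "real^'d^'d \<Rightarrow> real^'d \<Rightarrow> real" where
  "qform A t = t \<bullet> (A *v t)"

definition gradient :: "(real^'d \<Rightarrow> real) \<Rightarrow> real^'d \<Rightarrow> real^'d" where
  "gradient f t = (\<chi> j. frechet_derivative f (at t) (axis j 1))"

definition enum_idx :: "'a::finite \<Rightarrow> nat" where
  "enum_idx = (SOME f. bij_betw f UNIV {..<CARD('a)})"

definition stack_rows :: "(real^'d) list \<Rightarrow> real^'d^'d" where
  "stack_rows rs = (\<chi> i. rs ! enum_idx i)"

definition grad_list :: "('n::finite \<Rightarrow> real^'d^'d) \<Rightarrow> real^'d \<Rightarrow> (real^'d) list" where
  "grad_list P t = map (\<lambda>k. gradient (qform (P (inv enum_idx k))) t) [0..<CARD('n)]"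

definition S1 :: "((real^'d) \<times> (real^'n)) set" where
  "S1 = {(x, 0) | x. True}"

text \<open>Tangent space V(t) of the graph of (P_1,...,P_n).\<close>
definition tangent_space :: "('n \<Rightarrow> real^'d^'d) \<Rightarrow> real^'d \<Rightarrow> ((real^'d) \<times> (real^'n)) set" where
  "tangent_space P t =
     span {(axis j 1, \<chi> k. gradient (qform (P k)) t $ j) | j. True}"

definition orth_proj :: "'a::euclidean_space set \<Rightarrow> 'a \<Rightarrow> 'a" where
  "orth_proj W x = (THE p. p \<in> W \<and> (\<forall>w\<in>W. (x - p) \<bullet> w = 0))"

definition monomials_upto :: "nat \<Rightarrow> ('d::finite \<Rightarrow> nat) set" where
  "monomials_upto k = {\<alpha>. (\<Sum>i\<in>UNIV. \<alpha> i) \<le> k}"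

definition poly_eval :: "nat \<Rightarrow> (('d::finite \<Rightarrow> nat) \<Rightarrow> real) \<Rightarrow> real^'d \<Rightarrow> real" where
  "poly_eval k c t = (\<Sum>\<alpha>\<in>monomials_upto k. c \<alpha> * (\<Prod>i\<in>UNIV. (t $ i) ^ \<alpha> i))"

end

theory Submission
  imports Defs
begin


definition ispoly :: "nat \<Rightarrow> (real^'d::finite \<Rightarrow> real) \<Rightarrow> bool" where
  "ispoly k f \<longleftrightarrow> (\<exists>c. f = poly_eval k c)"

definition mon :: "('d::finite \<Rightarrow> nat) \<Rightarrow> real^'d \<Rightarrow> real" where
  "mon \<alpha> t = (\<Prod>i\<in>UNIV. (t $ i) ^ \<alpha> i)"

lemma finite_monomials: "finite (monomials_upto k :: ('d::finite \<Rightarrow> nat) set)"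
proof -
  have "monomials_upto k \<subseteq> PiE (UNIV::'d set) (\<lambda>_. {..k})"
  proof
    fix \<alpha> :: "'d \<Rightarrow> nat" assume "\<alpha> \<in> monomials_upto k"
    then have s: "(\<Sum>i\<in>UNIV. \<alpha> i) \<le> k" by (simp add: monomials_upto_def)
    have "\<alpha> i \<le> k" for i using member_le_sum[of i UNIV \<alpha>] s by simp
    then show "\<alpha> \<in> PiE UNIV (\<lambda>_. {..k})" by auto
  qed
  moreover have "finite (PiE (UNIV::'d set) (\<lambda>_. {..k}))" by (rule finite_PiE) auto
  ultimately show ?thesis by (rule finite_subset)
qed

lemma poly_eval_mono: "poly_eval k c = (\<lambda>t. \<Sum>\<alpha>\<in>monomials_upto k. c \<alpha> * mon \<alpha> t)"
  by (simp add: poly_eval_def mon_def fun_eq_iff)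

lemma ispoly_add: "ispoly k f \<Longrightarrow> ispoly k g \<Longrightarrow> ispoly k (\<lambda>t. f t + g t)"
proof -
  assume "ispoly k f" "ispoly k g"
  then obtain c e where "f = poly_eval k c" "g = poly_eval k e" by (auto simp: ispoly_def)
  then have "(\<lambda>t. f t + g t) = poly_eval k (\<lambda>\<alpha>. c \<alpha> + e \<alpha>)"
    by (simp add: poly_eval_def fun_eq_iff distrib_right sum.distrib)
  then show ?thesis by (auto simp: ispoly_def)
qed

lemma ispoly_scale: "ispoly k f \<Longrightarrow> ispoly k (\<lambda>t. a * f t)"
proof -
  assume "ispoly k f"
  then obtain c where "f = poly_eval k c" by (auto simp: ispoly_def)
  then have "(\<lambda>t. a * f t) = poly_eval k (\<lambda>\<alpha>. a * c \<alpha>)"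
    by (simp add: poly_eval_def fun_eq_iff sum_distrib_left mult.assoc)
  then show ?thesis by (auto simp: ispoly_def)
qed

lemma ispoly_zero: "ispoly k (\<lambda>t. 0)"
  unfolding ispoly_def poly_eval_def by (auto intro!: exI[of _ "\<lambda>\<alpha>. 0"])

lemma ispoly_sum: "finite A \<Longrightarrow> (\<And>x. x \<in> A \<Longrightarrow> ispoly k (f x)) \<Longrightarrow> ispoly k (\<lambda>t. \<Sum>x\<in>A. f x t)"
  by (induction A rule: finite_induct) (auto intro: ispoly_add ispoly_zero)

lemma ispoly_monomial:
  assumes "\<alpha> \<in> monomials_upto k"
  shows "ispoly k (mon \<alpha>)"
  unfolding ispoly_def poly_eval_mono
proof (intro exI[of _ "\<lambda>\<beta>. if \<beta> = \<alpha> then 1 else 0"])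
  show "mon \<alpha> = (\<lambda>t. \<Sum>\<beta>\<in>monomials_upto k. (if \<beta> = \<alpha> then 1 else 0) * mon \<beta> t)"
  proof
    fix t
    have "(\<Sum>\<beta>\<in>monomials_upto k. (if \<beta> = \<alpha> then 1 else 0) * mon \<beta> t)
        = (\<Sum>\<beta>\<in>monomials_upto k. (if \<beta> = \<alpha> then mon \<beta> t else 0))"
      by (rule sum.cong) auto
    also have "\<dots> = (\<Sum>\<beta>\<in>monomials_upto k. (if \<beta> = \<alpha> then mon \<alpha> t else 0))"
      by (rule sum.cong) auto
    also have "\<dots> = mon \<alpha> t" using assms finite_monomials[of k]
      by (subst sum.remove[of _ \<alpha>]) (auto intro!: sum.neutral)
    finally show "mon \<alpha> t = (\<Sum>\<beta>\<in>monomials_upto k. (if \<beta> = \<alpha> then 1 else 0) * mon \<beta> t)" by simp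
  qed
qed

lemma monomials_upto_mono: "k \<le> l \<Longrightarrow> \<alpha> \<in> monomials_upto k \<Longrightarrow> \<alpha> \<in> monomials_upto l"
  by (simp add: monomials_upto_def)

lemma ispoly_mono: "ispoly k f \<Longrightarrow> k \<le> l \<Longrightarrow> ispoly l f"
  unfolding ispoly_def[of k] poly_eval_mono
  by (auto intro!: ispoly_sum ispoly_scale ispoly_monomial finite_monomials
      intro: monomials_upto_mono)

lemma mono_add: "mon (\<lambda>i. \<alpha> i + \<beta> i) t = mon \<alpha> t * mon \<beta> t"
  by (simp add: mon_def power_add prod.distrib)

lemma monomials_add: "\<alpha> \<in> monomials_upto k \<Longrightarrow> \<beta> \<in> monomials_upto l \<Longrightarrow>
   (\<lambda>i. \<alpha> i + \<beta> i) \<in> monomials_upto (k + l)"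
  by (simp add: monomials_upto_def sum.distrib)

lemma ispoly_mult: "ispoly k f \<Longrightarrow> ispoly l g \<Longrightarrow> ispoly (k + l) (\<lambda>t. f t * g t)"
proof -
  assume "ispoly k f" "ispoly l g"
  then obtain c e where f: "f = poly_eval k c" and g: "g = poly_eval l e" by (auto simp: ispoly_def)
  have eq: "(\<lambda>t. f t * g t) = (\<lambda>t. \<Sum>\<alpha>\<in>monomials_upto k. \<Sum>\<beta>\<in>monomials_upto l.
          (c \<alpha> * e \<beta>) * mon (\<lambda>i. \<alpha> i + \<beta> i) t)"
    unfolding f g poly_eval_mono mono_add
    by (simp add: fun_eq_iff sum_product ac_simps)
  show ?thesis unfolding eq
    by (intro ispoly_sum finite_monomials ispoly_scale ispoly_monomial monomials_add)
qed

lemma ispoly_const: "ispoly k (\<lambda>t::real^'d::finite. a)"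
proof -
  have "(\<lambda>_. 0::nat) \<in> (monomials_upto k :: ('d \<Rightarrow> nat) set)" by (simp add: monomials_upto_def)
  then have "ispoly k (\<lambda>t::real^'d. a * mon (\<lambda>_::'d. 0::nat) t)" by (intro ispoly_scale ispoly_monomial)
  then show ?thesis by (simp add: mon_def)
qed

lemma ispoly_coord: "ispoly 1 (\<lambda>t::real^'d::finite. t $ i)"
proof -
  let ?a = "\<lambda>j::'d. if j = i then 1 else (0::nat)"
  have "?a \<in> monomials_upto 1" by (simp add: monomials_upto_def)
  then have "ispoly 1 (mon ?a)" by (rule ispoly_monomial)
  moreover have "mon ?a = (\<lambda>t. t $ i)"
    by (simp add: mon_def fun_eq_iff power_0 if_distrib cong: if_cong)
  ultimately show ?thesis by simp
qed

lemma ispoly_prod: "finite A \<Longrightarrow> (\<And>x. x \<in> A \<Longrightarrow> ispoly (dg x) (f x)) \<Longrightarrow>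
   ispoly (\<Sum>x\<in>A. dg x) (\<lambda>t. \<Prod>x\<in>A. f x t)"
proof (induction A rule: finite_induct)
  case empty then show ?case using ispoly_const[of 0 1] by simp
next
  case (insert x F)
  then show ?case by (simp add: ispoly_mult)
qed

lemma ispoly_linear: "linear (f :: real^'d::finite \<Rightarrow> real) \<Longrightarrow> ispoly 1 f"
proof -
  assume lf: "linear f"
  have ft: "f t = (\<Sum>i\<in>UNIV. f (axis i 1) * t $ i)" for t
  proof -
    have "t = (\<Sum>i\<in>UNIV. t $ i *\<^sub>R axis i 1)"
      by (simp add: vec_eq_iff axis_def if_distrib sum.delta cong: if_cong)
    then have "f t = f (\<Sum>i\<in>UNIV. t $ i *\<^sub>R axis i 1)" by simp
    also have "\<dots> = (\<Sum>i\<in>UNIV. t $ i * f (axis i 1))"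
      using lf by (simp add: linear_sum linear_scale)
    finally show ?thesis by (simp add: ac_simps)
  qed
  have eq: "f = (\<lambda>t. \<Sum>i\<in>UNIV. f (axis i 1) * t $ i)" by (rule ext) (rule ft)
  show ?thesis by (subst eq, intro ispoly_sum ispoly_scale ispoly_coord, simp)
qed



definition indep_fam :: "nat \<Rightarrow> (nat \<Rightarrow> 'a::real_vector) \<Rightarrow> bool" where
  "indep_fam m w \<longleftrightarrow> (\<forall>c. (\<Sum>j<m. c j *\<^sub>R w j) = 0 \<longrightarrow> (\<forall>j<m. c j = 0))"

lemma indep_famD: "indep_fam m w \<Longrightarrow> (\<Sum>j<m. c j *\<^sub>R w j) = 0 \<Longrightarrow> j < m \<Longrightarrow> c j = 0"
  unfolding indep_fam_def by blast

lemma indep_fam_inj: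
  assumes "indep_fam m w" shows "inj_on w {..<m}"
proof (rule inj_onI, rule ccontr)
  fix i j assume ij: "i \<in> {..<m}" "j \<in> {..<m}" "w i = w j" "i \<noteq> j"
  let ?c = "\<lambda>k. if k = i then 1 else if k = j then -1 else (0::real)"
  have "(\<Sum>k<m. ?c k *\<^sub>R w k) = (\<Sum>k<m. (if k = i then w i else 0) - (if k = j then w j else 0))"
    by (rule sum.cong) (use ij in auto)
  also have "\<dots> = 0" using ij by (simp add: sum_subtractf)
  finally have "?c i = 0" using indep_famD[OF assms, where c="?c" and j=i] ij by simp
  then show False by simp
qed

lemma indep_fam_independent:
  fixes w :: "nat \<Rightarrow> 'a::euclidean_space"
  assumes "indep_fam m w" shows "independent (w ` {..<m})"
proof -
  have inj: "inj_on w {..<m}" by (rule indep_fam_inj[OF assms])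
  show ?thesis
  proof (rule ccontr)
    assume "\<not> independent (w ` {..<m})"
    then obtain u v where uv: "v \<in> w ` {..<m}" "u v \<noteq> 0" "(\<Sum>x\<in>w ` {..<m}. u x *\<^sub>R x) = 0"
      using dependent_finite[of "w ` {..<m}"] by auto
    then obtain j where j: "j < m" "v = w j" by auto
    have "(\<Sum>j<m. u (w j) *\<^sub>R w j) = 0" using uv(3) by (simp add: sum.reindex[OF inj])
    then have "u (w j) = 0" using indep_famD[OF assms, where c="\<lambda>k. u (w k)" and j=j] j by simp
    with uv j show False by simp
  qed
qed

lemma indep_fam_le_dim:
  fixes w :: "nat \<Rightarrow> 'a::euclidean_space"
  assumes "indep_fam m w" "\<And>j. j < m \<Longrightarrow> w j \<in> S" shows "m \<le> dim S"
proof -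
  have "card (w ` {..<m}) = m" using indep_fam_inj[OF assms(1)] by (simp add: card_image)
  moreover have "card (w ` {..<m}) \<le> dim S"
    by (rule independent_card_le_dim) (use assms indep_fam_independent in auto)
  ultimately show ?thesis by simp
qed

lemma indep_fam_from_dim:
  fixes S :: "'a::euclidean_space set"
  assumes "m \<le> dim S" obtains w where "\<And>j. j < m \<Longrightarrow> w j \<in> S" "indep_fam m w"
proof -
  obtain B where B: "B \<subseteq> S" "independent B" "card B = dim S" by (meson basis_exists)
  obtain C where C: "C \<subseteq> B" "card C = m" "finite C" using obtain_subset_with_card_n[of m B] B assms by auto
  obtain h where h: "bij_betw h {0..<m} C" using ex_bij_betw_nat_finite[OF C(3)] C(2) by auto
  have indC: "independent C" using B(2) C(1) by (rule independent_mono)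
  have "indep_fam m h" unfolding indep_fam_def
  proof clarify
    fix c j assume s: "(\<Sum>j<m. c j *\<^sub>R h j) = 0" and j: "j < m"
    let ?u = "\<lambda>v. c (inv_into {0..<m} h v)"
    have "(\<Sum>v\<in>C. ?u v *\<^sub>R v) = (\<Sum>j\<in>{0..<m}. ?u (h j) *\<^sub>R h j)"
      using h by (simp add: sum.reindex_bij_betw[symmetric])
    also have "\<dots> = (\<Sum>j<m. c j *\<^sub>R h j)"
      using h by (auto simp: bij_betw_def atLeast0LessThan intro!: sum.cong)
    finally have "(\<Sum>v\<in>C. ?u v *\<^sub>R v) = 0" using s by simp
    then have "?u (h j) = 0" using indC C(3) j h unfolding dependent_finite[OF C(3)]
      by (metis atLeastLessThan_iff bij_betwE zero_le)
    then show "c j = 0" using h j by (simp add: bij_betw_def)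
  qed
  moreover have "h j \<in> S" if "j < m" for j
  proof -
    have "h j \<in> C" using bij_betwE[OF h] that by simp
    then show ?thesis using B(1) C(1) by blast
  qed
  ultimately show ?thesis using that by blast
qed

lemma indep_fam_scale:
  assumes "indep_fam m w" "\<And>j. j < m \<Longrightarrow> s j \<noteq> 0"
  shows "indep_fam m (\<lambda>j. s j *\<^sub>R w j)"
  unfolding indep_fam_def
proof clarify
  fix c j assume "(\<Sum>j<m. c j *\<^sub>R s j *\<^sub>R w j) = 0" "j < m"
  then have "(\<Sum>j<m. (c j * s j) *\<^sub>R w j) = 0" "j < m" by simp_all
  then have "c j * s j = 0" using indep_famD[OF assms(1), where c="\<lambda>j. c j * s j" and j=j] by simp
  then show "c j = 0" using assms(2) \<open>j < m\<close> by simp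
qed

lemma indep_fam_pull:
  assumes "linear f" "linear g" "\<And>v. f v = 0 \<Longrightarrow> g v = 0"
    and "indep_fam m (\<lambda>j. g (v j))"
  shows "indep_fam m (\<lambda>j. f (v j))"
  unfolding indep_fam_def
proof clarify
  fix c j assume s: "(\<Sum>j<m. c j *\<^sub>R f (v j)) = 0" and j: "j < m"
  have "f (\<Sum>j<m. c j *\<^sub>R v j) = 0" using s assms(1) by (simp add: linear_sum linear_scale)
  then have "g (\<Sum>j<m. c j *\<^sub>R v j) = 0" by (rule assms(3))
  then have "(\<Sum>j<m. c j *\<^sub>R g (v j)) = 0" using assms(2) by (simp add: linear_sum linear_scale)
  then show "c j = 0" using indep_famD[OF assms(4)] j by blast
qed

lemma enum_bij: "bij_betw (enum_idx :: 'a::finite \<Rightarrow> nat) UNIV {..<CARD('a)}"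
proof -
  have "\<exists>f. bij_betw f (UNIV::'a set) {..<CARD('a)}"
    using ex_bij_betw_finite_nat[of "UNIV::'a set"] by (simp add: atLeast0LessThan)
  then show ?thesis unfolding enum_idx_def by (rule someI_ex)
qed

lemma enum_lt: "enum_idx (i::'a::finite) < CARD('a)"
  using enum_bij[where 'a='a] by (auto simp: bij_betw_def)

lemma enum_inj: "enum_idx (i::'a::finite) = enum_idx j \<longleftrightarrow> i = j"
  using enum_bij[where 'a='a] by (auto simp: bij_betw_def inj_on_def)

lemma enum_inv1: "inv (enum_idx :: 'a::finite \<Rightarrow> nat) (enum_idx i) = i"
  using enum_bij[where 'a='a] by (simp add: bij_betw_def inv_f_f)

lemma enum_inv2: "k < CARD('a) \<Longrightarrow> enum_idx (inv (enum_idx :: 'a::finite \<Rightarrow> nat) k) = k"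
  using enum_bij[where 'a='a] by (auto simp: bij_betw_def f_inv_into_f)

lemma sum_enum:
  fixes g :: "nat \<Rightarrow> 'b::comm_monoid_add"
  assumes "m \<le> CARD('a::finite)"
  shows "(\<Sum>j\<in>(UNIV::'a set). if enum_idx j < m then g (enum_idx j) else 0) = (\<Sum>k<m. g k)"
proof -
  have "(\<Sum>j\<in>(UNIV::'a set). if enum_idx j < m then g (enum_idx j) else 0)
      = (\<Sum>k\<in>{..<CARD('a)}. if k < m then g k else 0)"
    using sum.reindex_bij_betw[OF enum_bij[where 'a='a], of "\<lambda>k. if k < m then g k else 0"] by simp
  also have "\<dots> = (\<Sum>k<m. if k < m then g k else 0)"
    by (rule sum.mono_neutral_right) (use assms in auto)
  finally show ?thesis by simp
qed

lemma sum_enum_all: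
  fixes g :: "nat \<Rightarrow> 'b::comm_monoid_add"
  shows "(\<Sum>j\<in>(UNIV::'a::finite set). g (enum_idx j)) = (\<Sum>k<CARD('a). g k)"
  using sum_enum[of "CARD('a)" g, where 'a='a] enum_lt[where 'a='a] by simp

lemma det_nz_ker:
  fixes A :: "real^'n::finite^'n"
  shows "det A \<noteq> 0 \<longleftrightarrow> (\<forall>x. A *v x = 0 \<longrightarrow> x = 0)"
proof -
  have "(\<forall>x. A *v x = 0 \<longrightarrow> x = 0) \<longleftrightarrow> (\<exists>B. B ** A = mat 1)" by (simp add: matrix_left_invertible_ker)
  also have "\<dots> \<longleftrightarrow> invertible A" unfolding invertible_def using matrix_left_right_inverse by blast
  also have "\<dots> \<longleftrightarrow> det A \<noteq> 0" by (rule invertible_det_nz)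
  finally show ?thesis by simp
qed

definition gram :: "nat \<Rightarrow> (nat \<Rightarrow> real^'d::finite) \<Rightarrow> (nat \<Rightarrow> real^'d) \<Rightarrow> real^'d^'d" where
  "gram m a b = (\<chi> i j. if enum_idx i < m \<and> enum_idx j < m then a (enum_idx i) \<bullet> b (enum_idx j)
                        else if i = j then 1 else 0)"

lemma gram_mult:
  fixes a b :: "nat \<Rightarrow> real^'d::finite"
  assumes "m \<le> CARD('d)"
  shows "(gram m a b *v x) $ i = (if enum_idx i < m then
           a (enum_idx i) \<bullet> (\<Sum>k<m. x $ inv enum_idx k *\<^sub>R b k) else x $ i)"
proof (cases "enum_idx i < m")
  case True
  have "(gram m a b *v x) $ i = (\<Sum>j\<in>(UNIV::'d set). if enum_idx j < m then
            (\<lambda>k. a (enum_idx i) \<bullet> b k * x $ inv enum_idx k) (enum_idx j) else 0)"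
    unfolding gram_def matrix_vector_mult_def vec_lambda_beta
  proof (intro sum.cong refl)
    fix j :: 'd
    show "(if enum_idx i < m \<and> enum_idx j < m then a (enum_idx i) \<bullet> b (enum_idx j) else if i = j then 1 else 0) * x $ j
       = (if enum_idx j < m then a (enum_idx i) \<bullet> b (enum_idx j) * x $ inv enum_idx (enum_idx j) else 0)"
      using True by (cases "enum_idx j < m") (auto simp: enum_inv1)
  qed
  also have "\<dots> = (\<Sum>k<m. a (enum_idx i) \<bullet> b k * x $ inv enum_idx k)" by (rule sum_enum[OF assms])
  also have "\<dots> = a (enum_idx i) \<bullet> (\<Sum>k<m. x $ inv enum_idx k *\<^sub>R b k)"
    by (simp add: inner_sum_right ac_simps)
  finally show ?thesis using True by simp
next
  case False
  have "(gram m a b *v x) $ i = (\<Sum>j\<in>UNIV. if j = i then x $ i else 0)"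
    unfolding gram_def matrix_vector_mult_def vec_lambda_beta
    by (rule sum.cong[OF refl]) (use False in auto)
  then show ?thesis using False by simp
qed

lemma gram_indep:
  fixes a b :: "nat \<Rightarrow> real^'d::finite"
  assumes "det (gram m a b) \<noteq> 0" "m \<le> CARD('d)"
  shows "indep_fam m b"
  unfolding indep_fam_def
proof clarify
  fix c k assume s: "(\<Sum>j<m. c j *\<^sub>R b j) = 0" and k: "k < m"
  define x :: "real^'d" where "x = (\<chi> j. if enum_idx j < m then c (enum_idx j) else 0)"
  have xc: "x $ inv enum_idx j = c j" if "j < m" for j
    using that assms(2) by (simp add: x_def enum_inv2)
  have "(\<Sum>j<m. x $ inv enum_idx j *\<^sub>R b j) = (\<Sum>j<m. c j *\<^sub>R b j)" by (rule sum.cong) (simp_all add: xc)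
  then have eqS: "(\<Sum>j<m. x $ inv enum_idx j *\<^sub>R b j) = 0" using s by simp
  have "gram m a b *v x = 0"
  proof (rule vec_eq_iff[THEN iffD2], clarify)
    fix i
    have "(gram m a b *v x) $ i = (if enum_idx i < m then a (enum_idx i) \<bullet> 0 else x $ i)"
      using gram_mult[OF assms(2), of a b x i] eqS by simp
    then show "(gram m a b *v x) $ i = 0 $ i" by (simp add: x_def)
  qed
  then have "x = 0" using assms(1) det_nz_ker by blast
  then show "c k = 0" using xc[OF k] by simp
qed

lemma gram_nz:
  fixes a :: "nat \<Rightarrow> real^'d::finite"
  assumes "indep_fam m a" "m \<le> CARD('d)"
  shows "det (gram m a a) \<noteq> 0"
  unfolding det_nz_ker
proof clarify
  fix x assume gx: "gram m a a *v x = 0"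
  define S where "S = (\<Sum>k<m. x $ inv enum_idx k *\<^sub>R a k)"
  have out: "x $ i = 0" if "\<not> enum_idx i < m" for i
    using gx that by (metis gram_mult[OF assms(2)] zero_index)
  have ins: "a k \<bullet> S = 0" if "k < m" for k
  proof -
    have "enum_idx (inv enum_idx k :: 'd) = k" using that assms(2) by (simp add: enum_inv2)
    then show ?thesis using gx gram_mult[OF assms(2), of a a x "inv enum_idx k"] that
      by (simp add: S_def vec_eq_iff)
  qed
  have "S \<bullet> S = (\<Sum>k<m. x $ inv enum_idx k * (a k \<bullet> S))"
    by (simp add: S_def inner_sum_left)
  also have "\<dots> = 0" using ins by simp
  finally have "S = 0" by simp
  then have c0: "x $ inv enum_idx k = 0" if "k < m" for k
    using indep_famD[OF assms(1), where c="\<lambda>k. x $ inv enum_idx k"] that unfolding S_def by simp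
  show "x = 0"
  proof (rule vec_eq_iff[THEN iffD2], clarify)
    fix i show "x $ i = 0 $ i"
      using c0[of "enum_idx i"] out[of i] by (cases "enum_idx i < m") (simp_all add: enum_inv1)
  qed
qed



lemma grad_qform: "gradient (qform A) t = (A + transpose A) *v t"
proof -
  have d: "(qform A has_derivative (\<lambda>h. t \<bullet> (A *v h) + h \<bullet> (A *v t))) (at t)"
    unfolding qform_def
    by (rule has_derivative_inner[OF has_derivative_ident bounded_linear_imp_has_derivative])
      (rule matrix_vector_mul_bounded_linear)
  have fd: "frechet_derivative (qform A) (at t) = (\<lambda>h. t \<bullet> (A *v h) + h \<bullet> (A *v t))"
    using frechet_derivative_at[OF d] by simp
  show ?thesis
  proof (rule vec_eq_iff[THEN iffD2], clarify)
    fix j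
    have "t \<bullet> (A *v axis j 1) = (t v* A) $ j"
      by (simp add: dot_lmul_matrix[symmetric] inner_axis)
    then show "gradient (qform A) t $ j = ((A + transpose A) *v t) $ j"
      unfolding gradient_def fd
      by (simp add: matrix_vector_mult_add_rdistrib inner_axis' add.commute)
  qed
qed

definition G :: "('n::finite \<Rightarrow> real^'d::finite^'d) \<Rightarrow> 'n \<Rightarrow> real^'d \<Rightarrow> real^'d" where
  "G P k t = gradient (qform (P k)) t"

lemma G_eq: "G P k t = (P k + transpose (P k)) *v t"
  by (simp add: G_def grad_qform)

definition rho :: "('n::finite \<Rightarrow> real^'d::finite^'d) \<Rightarrow> real^'d \<Rightarrow> (real^'d) \<times> (real^'n) \<Rightarrow> real^'d" where
  "rho P t v = fst v + (\<Sum>k\<in>UNIV. snd v $ k *\<^sub>R G P k t)"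

lemma linear_rho: "linear (rho P t)"
  by (rule linearI) (simp_all add: rho_def algebra_simps sum.distrib scaleR_sum_right)

lemma rho_S1: "rho P t (x, 0) = x"
  by (simp add: rho_def)

lemma rho_scale: "rho P (s *\<^sub>R t) (x, z) = x + s *\<^sub>R (\<Sum>k\<in>UNIV. z $ k *\<^sub>R G P k t)"
  by (simp add: rho_def G_eq matrix_vector_mult_scaleR scaleR_sum_right ac_simps)

lemma G_linear: "linear (\<lambda>t. G P k t)"
  unfolding G_eq by simp

lemma ispoly_rho: "ispoly 1 (\<lambda>t. y \<bullet> rho P t (x, z))"
proof -
  have lin: "linear (\<lambda>t. y \<bullet> (\<Sum>k\<in>UNIV. z $ k *\<^sub>R G P k t))"
    by (rule linearI) (simp_all add: G_eq algebra_simps sum.distrib scaleR_sum_right inner_sum_right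
        inner_add_right sum_distrib_left)
  have eq: "(\<lambda>t. y \<bullet> rho P t (x, z)) = (\<lambda>t. y \<bullet> x + y \<bullet> (\<Sum>k\<in>UNIV. z $ k *\<^sub>R G P k t))"
    by (simp add: rho_def inner_add_right)
  show ?thesis unfolding eq by (intro ispoly_add ispoly_const ispoly_linear lin)
qed

lemma tangent_space_eq: "tangent_space P t = span (range (\<lambda>j. (axis j 1, \<chi> k. G P k t $ j)))"
  unfolding tangent_space_def G_def by (rule arg_cong[where f=span]) auto

lemma orth_tan:
  assumes "\<forall>w\<in>tangent_space P t. v \<bullet> w = 0"
  shows "rho P t v = 0"
proof (rule vec_eq_iff[THEN iffD2], clarify)
  fix j
  have "v \<bullet> (axis j 1, \<chi> k. G P k t $ j) = 0"
    using assms unfolding tangent_space_eq by (auto intro: span_base)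
  moreover have "v \<bullet> (axis j 1, \<chi> k. G P k t $ j) = fst v $ j + snd v \<bullet> (\<chi> k. G P k t $ j)"
    by (cases v) (simp add: inner_axis)
  moreover have "snd v \<bullet> (\<chi> k. G P k t $ j) = (\<Sum>k\<in>UNIV. snd v $ k * G P k t $ j)"
    by (simp add: inner_vec_def)
  moreover have "rho P t v $ j = fst v $ j + (\<Sum>k\<in>UNIV. snd v $ k * G P k t $ j)"
    by (simp add: rho_def sum_component)
  ultimately show "rho P t v $ j = 0 $ j" by simp
qed

lemma orth_proj_exists:
  fixes S :: "'a::euclidean_space set"
  shows "\<exists>p. p \<in> span S \<and> (\<forall>w\<in>span S. (x - p) \<bullet> w = 0)"
proof -
  obtain y z where "y \<in> span S" "\<And>w. w \<in> span S \<Longrightarrow> orthogonal z w" "x = y + z"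
    using orthogonal_subspace_decomp_exists by blast
  then show ?thesis by (intro exI[of _ y]) (auto simp: orthogonal_def)
qed

lemma orth_proj_unique:
  fixes S :: "'a::euclidean_space set"
  assumes "p \<in> span S" "\<forall>w\<in>span S. (x - p) \<bullet> w = 0"
    and "q \<in> span S" "\<forall>w\<in>span S. (x - q) \<bullet> w = 0"
  shows "p = q"
proof -
  have "p - q \<in> span S" using assms by (simp add: span_diff)
  then have "(x - q) \<bullet> (p - q) - (x - p) \<bullet> (p - q) = 0" using assms by simp
  then have "(p - q) \<bullet> (p - q) = 0" by (simp add: algebra_simps inner_diff_left inner_diff_right)
  then show ?thesis by simp
qed

lemma orth_proj_char:
  fixes S :: "'a::euclidean_space set"
  assumes "p \<in> span S" "\<forall>w\<in>span S. (x - p) \<bullet> w = 0"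
  shows "orth_proj (span S) x = p"
  unfolding orth_proj_def
  by (rule the_equality) (use assms orth_proj_unique in blast)+

lemma orth_proj_prop:
  fixes S :: "'a::euclidean_space set"
  shows "orth_proj (span S) x \<in> span S \<and> (\<forall>w\<in>span S. (x - orth_proj (span S) x) \<bullet> w = 0)"
proof -
  obtain p where "p \<in> span S \<and> (\<forall>w\<in>span S. (x - p) \<bullet> w = 0)" using orth_proj_exists by blast
  then show ?thesis using orth_proj_char by metis
qed

lemma linear_orth_proj:
  fixes S :: "'a::euclidean_space set"
  shows "linear (orth_proj (span S))"
proof (rule linearI)
  fix x y
  show "orth_proj (span S) (x + y) = orth_proj (span S) x + orth_proj (span S) y"
    using orth_proj_prop[of S x] orth_proj_prop[of S y]
    by (intro orth_proj_char) (auto simp: span_add inner_diff_left inner_add_left algebra_simps)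
next
  fix c x
  show "orth_proj (span S) (c *\<^sub>R x) = c *\<^sub>R orth_proj (span S) x"
  proof (intro orth_proj_char)
    show "c *\<^sub>R orth_proj (span S) x \<in> span S" using orth_proj_prop[of S x] by (simp add: span_mul)
    show "\<forall>w\<in>span S. (c *\<^sub>R x - c *\<^sub>R orth_proj (span S) x) \<bullet> w = 0"
      using orth_proj_prop[of S x] by (metis inner_scaleR_left mult_zero_right scaleR_right_diff_distrib)
  qed
qed

lemma orth_proj_zero:
  fixes S :: "'a::euclidean_space set"
  assumes "orth_proj (span S) v = 0" shows "\<forall>w\<in>span S. v \<bullet> w = 0"
  using orth_proj_prop[of S v] assms by simp

lemma key_dim:
  fixes P :: "'n::finite \<Rightarrow> real^'d::finite^'d" and V :: "((real^'d) \<times> (real^'n)) set"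
  assumes "indep_fam m (\<lambda>j. rho P t (vv j))" "\<And>j. j < m \<Longrightarrow> vv j \<in> V"
  shows "m \<le> dim (orth_proj (tangent_space P t) ` V)"
proof -
  have "indep_fam m (\<lambda>j. orth_proj (tangent_space P t) (vv j))"
    unfolding tangent_space_eq
  proof (rule indep_fam_pull[OF linear_orth_proj linear_rho _ assms(1)[unfolded tangent_space_eq]])
    fix v :: "(real^'d) \<times> (real^'n)" assume "orth_proj (span (range (\<lambda>j. (axis j 1, \<chi> k. G P k t $ j)))) v = 0"
    then show "rho P t v = 0" using orth_tan[of P t v] orth_proj_zero unfolding tangent_space_eq by blast
  qed
  then show ?thesis by (rule indep_fam_le_dim) (use assms(2) in auto)
qed



lemma sum_count: "(\<Sum>k<m. if h \<le> k then 1 else 0::nat) = m - h"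
  by (induction m) auto

lemma ispoly_det_gram:
  fixes a :: "nat \<Rightarrow> real^'d::finite" and b :: "nat \<Rightarrow> real^'d \<Rightarrow> real^'d"
  assumes m: "m \<le> CARD('d)"
    and const: "\<And>j t. j < h \<Longrightarrow> b j t = b j 0"
    and lin: "\<And>j y. h \<le> j \<Longrightarrow> j < m \<Longrightarrow> ispoly 1 (\<lambda>t. y \<bullet> b j t)"
  shows "ispoly (m - h) (\<lambda>t. det (gram m a (\<lambda>j. b j t)))"
proof -
  define dg :: "'d \<Rightarrow> nat" where "dg j = (if enum_idx j < m then (if h \<le> enum_idx j then 1 else 0) else 0)" for j
  have ent: "ispoly (dg j) (\<lambda>t. gram m a (\<lambda>j. b j t) $ i $ j)" for i j
  proof (cases "enum_idx i < m \<and> enum_idx j < m")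
    case True
    show ?thesis
    proof (cases "h \<le> enum_idx j")
      case True2: True
      then show ?thesis using True lin[of "enum_idx j" "a (enum_idx i)"]
        by (simp add: gram_def dg_def)
    next
      case False
      have "gram m a (\<lambda>j. b j t) $ i $ j = a (enum_idx i) \<bullet> b (enum_idx j) 0" for t
        using True False const[of "enum_idx j" t] by (simp add: gram_def)
      then have "(\<lambda>t. gram m a (\<lambda>j. b j t) $ i $ j) = (\<lambda>t. a (enum_idx i) \<bullet> b (enum_idx j) 0)"
        by (rule ext)
      then show ?thesis by (simp add: ispoly_const)
    qed
  next
    case False
    then have "(\<lambda>t. gram m a (\<lambda>j. b j t) $ i $ j) = (\<lambda>t. if i = j then 1 else 0)"
      by (auto simp: gram_def)
    then show ?thesis by (simp add: ispoly_const)
  qed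
  have sdg: "(\<Sum>j\<in>UNIV. dg j) = m - h"
  proof -
    have "(\<Sum>j\<in>UNIV. dg j) = (\<Sum>j\<in>(UNIV::'d set). if enum_idx j < m then (\<lambda>k. if h \<le> k then 1 else 0::nat) (enum_idx j) else 0)"
      by (simp add: dg_def)
    also have "\<dots> = (\<Sum>k<m. if h \<le> k then 1 else 0::nat)" by (rule sum_enum[OF m])
    finally show ?thesis by (simp add: sum_count)
  qed
  have pp: "ispoly (m - h) (\<lambda>t. \<Prod>i\<in>UNIV. gram m a (\<lambda>j. b j t) $ i $ p i)" if "p permutes UNIV" for p
  proof -
    have "ispoly (\<Sum>i\<in>UNIV. dg (p i)) (\<lambda>t. \<Prod>i\<in>UNIV. gram m a (\<lambda>j. b j t) $ i $ p i)"
      by (rule ispoly_prod) (auto intro: ent)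
    moreover have "(\<Sum>i\<in>UNIV. dg (p i)) = (\<Sum>j\<in>UNIV. dg j)"
      using sum.permute[OF that, of dg] by (simp add: comp_def)
    ultimately show ?thesis using sdg by simp
  qed
  show ?thesis unfolding det_def
    by (rule ispoly_sum) (auto intro!: ispoly_scale pp)
qed

lemma rows_indep:
  fixes rs :: "(real^'d::finite) list"
  assumes "det (stack_rows rs) \<noteq> 0"
  shows "indep_fam CARD('d) (\<lambda>j. rs ! j)"
  unfolding indep_fam_def
proof clarify
  fix c j assume s: "(\<Sum>j<CARD('d). c j *\<^sub>R rs ! j) = 0" and j: "j < CARD('d)"
  define x :: "real^'d" where "x = (\<chi> i. c (enum_idx i))"
  have "transpose (stack_rows rs) *v x = 0"
  proof (rule vec_eq_iff[THEN iffD2], clarify)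
    fix k
    have "(transpose (stack_rows rs) *v x) $ k = (\<Sum>i\<in>(UNIV::'d set). (\<lambda>i. c i * rs ! i $ k) (enum_idx i))"
      by (simp add: matrix_vector_mult_def transpose_def stack_rows_def x_def mult.commute)
    also have "\<dots> = (\<Sum>i<CARD('d). c i * rs ! i $ k)" by (rule sum_enum_all)
    also have "\<dots> = (\<Sum>i<CARD('d). c i *\<^sub>R rs ! i) $ k" by (simp add: sum_component)
    finally show "(transpose (stack_rows rs) *v x) $ k = 0 $ k" using s by simp
  qed
  then have "x = 0" using assms det_transpose det_nz_ker by metis
  then have "x $ inv enum_idx j = 0" by simp
  then show "c j = 0" using j by (simp add: x_def enum_inv2)
qed

lemma sum_split: "(\<Sum>j<a + (b::nat). f j) = (\<Sum>j<a. f j) + (\<Sum>l<b. f (a + l))"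
  by (induction b) (simp_all add: add.assoc)

lemma grad_list_nth: "k < CARD('n) \<Longrightarrow> grad_list P t ! k = G P (inv (enum_idx :: 'n::finite \<Rightarrow> nat) k) t"
  by (simp add: grad_list_def G_def)

lemma length_grad_list: "length (grad_list (P :: 'n::finite \<Rightarrow> _) t) = CARD('n)"
  by (simp add: grad_list_def)

lemma comb:
  fixes P :: "'n::finite \<Rightarrow> real^'d::finite^'d" and e :: "nat \<Rightarrow> real^'d"
  assumes ind: "indep_fam CARD('d) (\<lambda>j. (grad_list P t1 @ ws) ! j)"
    and ws: "\<And>i. i < H1 \<Longrightarrow> ws ! i = e i"
    and H1: "H1 \<le> CARD('d) - CARD('n)" and nd: "CARD('n) \<le> CARD('d)"
    and s: "(\<Sum>i<H1. a i *\<^sub>R e i) + (\<Sum>k\<in>UNIV. \<beta> k *\<^sub>R G P k t1) = 0"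
  shows "(\<forall>i<H1. a i = 0) \<and> (\<forall>k. \<beta> k = 0)"
proof -
  let ?n = "CARD('n)" and ?d = "CARD('d)"
  let ?rs = "grad_list P t1 @ ws"
  define c where "c j = (if j < ?n then \<beta> (inv enum_idx j) else if j < ?n + H1 then a (j - ?n) else 0)" for j
  have d: "?d = ?n + (?d - ?n)" using nd by simp
  have "(\<Sum>j<?d. c j *\<^sub>R ?rs ! j) = (\<Sum>j<?n. c j *\<^sub>R ?rs ! j) + (\<Sum>l<?d - ?n. c (?n + l) *\<^sub>R ?rs ! (?n + l))"
    by (subst d, subst sum_split) simp
  also have "(\<Sum>j<?n. c j *\<^sub>R ?rs ! j) = (\<Sum>j<?n. \<beta> (inv enum_idx j) *\<^sub>R G P (inv enum_idx j) t1)"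
    by (rule sum.cong) (simp_all add: c_def nth_append length_grad_list grad_list_nth)
  also have "\<dots> = (\<Sum>k\<in>(UNIV::'n set). (\<lambda>j. \<beta> (inv enum_idx j) *\<^sub>R G P (inv enum_idx j) t1) (enum_idx k))"
    by (rule sum_enum_all[symmetric])
  also have "\<dots> = (\<Sum>k\<in>UNIV. \<beta> k *\<^sub>R G P k t1)" by (simp add: enum_inv1)
  also have "(\<Sum>l<?d - ?n. c (?n + l) *\<^sub>R ?rs ! (?n + l)) = (\<Sum>l<?d - ?n. if l < H1 then a l *\<^sub>R e l else 0)"
    by (rule sum.cong) (simp_all add: c_def nth_append length_grad_list ws)
  also have "\<dots> = (\<Sum>l<H1. if l < H1 then a l *\<^sub>R e l else 0)"
    by (rule sum.mono_neutral_right) (use H1 in auto)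
  also have "\<dots> = (\<Sum>l<H1. a l *\<^sub>R e l)" by simp
  finally have "(\<Sum>j<?d. c j *\<^sub>R ?rs ! j) = 0" using s by (simp add: add.commute)
  then have c0: "c j = 0" if "j < ?d" for j using indep_famD[OF ind, where c=c] that by blast
  show ?thesis
  proof safe
    fix i assume "i < H1" then show "a i = 0" using c0[of "?n + i"] H1 by (simp add: c_def)
  next
    fix k :: 'n
    have "enum_idx k < ?n" by (rule enum_lt)
    then show "\<beta> k = 0" using c0[of "enum_idx k"] nd by (simp add: c_def enum_inv1)
  qed
qed

lemma ext_ws:
  fixes e :: "nat \<Rightarrow> real^'d::finite"
  assumes "indep_fam h e" "h \<le> q" "q \<le> CARD('d)"
  obtains ws where "length ws = q" "distinct ws" "independent (set ws)" "\<And>i. i < h \<Longrightarrow> ws ! i = e i"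
proof -
  let ?E = "e ` {..<h}"
  have indE: "independent ?E" by (rule indep_fam_independent[OF assms(1)])
  have injE: "inj_on e {..<h}" by (rule indep_fam_inj[OF assms(1)])
  obtain B where B: "?E \<subseteq> B" "independent B" "UNIV \<subseteq> span B"
    using maximal_independent_subset_extend[of ?E UNIV] indE by auto
  have cardB: "card B = CARD('d)" using basis_card_eq_dim[of B UNIV] B by simp
  have finB: "finite B" using B(2) by (rule finiteI_independent)
  have "card (B - ?E) = CARD('d) - h"
    using B(1) finB cardB injE by (simp add: card_Diff_subset card_image finite_subset)
  then have "q - h \<le> card (B - ?E)" using assms(3) by simp
  then obtain F where F: "F \<subseteq> B - ?E" "card F = q - h" "finite F"
    by (rule obtain_subset_with_card_n)
  obtain fl where fl: "set fl = F" "distinct fl" using finite_distinct_list[OF F(3)] by auto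
  let ?ws = "map e [0..<h] @ fl"
  show ?thesis
  proof (rule that[of ?ws])
    show "length ?ws = q" using fl F assms(2) distinct_card[OF fl(2)] by simp
    show "distinct ?ws" using fl F injE by (auto simp: distinct_map atLeast0LessThan lessThan_def)
    have "set ?ws \<subseteq> B" using fl F B by auto
    then show "independent (set ?ws)" using B(2) independent_mono by blast
    show "?ws ! i = e i" if "i < h" for i using that by (simp add: nth_append)
  qed
qed

lemma S1_iff: "v \<in> S1 \<longleftrightarrow> snd v = 0"
  by (cases v) (auto simp: S1_def)

lemma subspace_S1: "subspace (S1 :: ((real^'d::finite) \<times> (real^'n::finite)) set)"
  unfolding subspace_def by (auto simp: S1_iff)

lemma snd_dim:
  fixes V :: "((real^'d::finite) \<times> (real^'n::finite)) set"
  assumes V: "subspace V"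
  shows "dim V - dim (V \<inter> S1) \<le> dim (snd ` V)"
proof -
  let ?K = "V \<inter> S1"
  let ?W = "{y \<in> V. \<forall>x \<in> ?K. orthogonal x y}"
  have sK: "subspace ?K" using V subspace_S1 by (rule subspace_inter)
  have dW: "dim ?W + dim ?K = dim V"
    by (rule dim_subspace_orthogonal_to_vectors) (use sK V in auto)
  have sW: "subspace ?W"
  proof -
    have "?W = V \<inter> {y. \<forall>x \<in> ?K. orthogonal x y}" by auto
    then show ?thesis using subspace_inter[OF V subspace_orthogonal_to_vectors] by simp
  qed
  have lsnd: "linear snd" by (rule linearI) auto
  have inj: "inj_on snd (span ?W)"
    unfolding span_eq_iff[THEN iffD2, OF sW]
  proof (rule inj_onI)
    fix y y' assume yy: "y \<in> ?W" "y' \<in> ?W" "snd y = snd y'"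
    have "y - y' \<in> ?W" using subspace_diff[OF sW yy(1) yy(2)] .
    moreover have "y - y' \<in> S1" using yy by (simp add: S1_iff)
    ultimately have "orthogonal (y - y') (y - y')" by auto
    then show "y = y'" by (simp add: orthogonal_def)
  qed
  have "dim (snd ` ?W) = dim ?W" by (rule dim_image_eq[OF lsnd inj])
  moreover have "dim (snd ` ?W) \<le> dim (snd ` V)" by (rule dim_subset) auto
  ultimately show ?thesis using dW by linarith
qed



theorem mainTheorem16:
  fixes P :: "'n::finite \<Rightarrow> real^'d::finite^'d"
    and V :: "((real^'d) \<times> (real^'n)) set"
    and H1 H2 :: nat
  assumes "CARD('n) \<le> CARD('d)"
    and nondeg: "\<And>ws. length ws = CARD('d) - CARD('n) \<Longrightarrow> distinct ws \<Longrightarrow> independent (set ws)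
                  \<Longrightarrow> \<exists>t. det (stack_rows (grad_list P t @ ws)) \<noteq> 0"
    and "subspace V"
    and "H1 \<le> min (dim (V \<inter> S1)) (CARD('d) - CARD('n))"
    and "H2 \<le> dim V - dim (V \<inter> S1)"
  shows "\<exists>c. (\<exists>\<alpha>\<in>monomials_upto H2. c \<alpha> \<noteq> 0) \<and>
           (\<forall>t. poly_eval H2 c t \<noteq> 0 \<longrightarrow>
                H1 + H2 \<le> dim (orth_proj (tangent_space P t) ` V))"
proof -
  have H1a: "H1 \<le> dim (V \<inter> S1)" and H1b: "H1 \<le> CARD('d) - CARD('n)" using assms(4) by auto
  obtain e' where e'S: "\<And>j. j < H1 \<Longrightarrow> e' j \<in> V \<inter> S1" and e'i: "indep_fam H1 e'"
    using indep_fam_from_dim[OF H1a] by blast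
  define e where "e j = fst (e' j)" for j
  have e'eq: "e' j = (e j, 0)" if "j < H1" for j
    using e'S[OF that] by (cases "e' j") (simp add: e_def S1_iff)
  have eV: "(e j, 0) \<in> V" if "j < H1" for j using e'S[OF that] e'eq[OF that] by simp
  have ei: "indep_fam H1 e" unfolding indep_fam_def
  proof clarify
    fix c j assume s: "(\<Sum>j<H1. c j *\<^sub>R e j) = 0" "j < H1"
    have "(\<Sum>j<H1. c j *\<^sub>R e' j) = (\<Sum>j<H1. c j *\<^sub>R (e j, 0))" by (rule sum.cong) (simp_all add: e'eq)
    also have "\<dots> = ((\<Sum>j<H1. c j *\<^sub>R e j), 0)" by (simp add: prod_eq_iff fst_sum snd_sum)
    finally have "(\<Sum>j<H1. c j *\<^sub>R e' j) = 0" using s by (simp add: zero_prod_def)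
    then show "c j = 0" using indep_famD[OF e'i, where c=c] s(2) by blast
  qed
  obtain ws where ws: "length ws = CARD('d) - CARD('n)" "distinct ws" "independent (set ws)"
      "\<And>i. i < H1 \<Longrightarrow> ws ! i = e i"
    using ext_ws[OF ei H1b] by auto
  obtain t1 where t1: "det (stack_rows (grad_list P t1 @ ws)) \<noteq> 0" using nondeg[OF ws(1-3)] by blast
  have rs: "indep_fam CARD('d) (\<lambda>j. (grad_list P t1 @ ws) ! j)" by (rule rows_indep[OF t1])
  have H2d: "H2 \<le> dim (snd ` V)" using assms(5) snd_dim[OF assms(3)] by linarith
  obtain z where zV: "\<And>j. j < H2 \<Longrightarrow> z j \<in> snd ` V" and zi: "indep_fam H2 z"
    using indep_fam_from_dim[OF H2d] by blast
  define x where "x j = (SOME x. (x, z j) \<in> V)" for j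
  have xV: "(x j, z j) \<in> V" if "j < H2" for j
  proof -
    from zV[OF that] obtain v where "v \<in> V" "z j = snd v" by auto
    then have "\<exists>x. (x, z j) \<in> V" by (metis prod.collapse)
    then show ?thesis unfolding x_def by (rule someI_ex)
  qed
  define LT where "LT w = (\<Sum>k\<in>UNIV. w $ k *\<^sub>R G P k t1)" for w :: "real^'n"
  define m where "m = H1 + H2"
  define v0 where "v0 j = (if j < H1 then e j else LT (z (j - H1)))" for j
  have v0i: "indep_fam m v0" unfolding indep_fam_def
  proof clarify
    fix c j assume s: "(\<Sum>j<m. c j *\<^sub>R v0 j) = 0" and j: "j < m"
    have "(\<Sum>j<m. c j *\<^sub>R v0 j) = (\<Sum>i<H1. c i *\<^sub>R v0 i) + (\<Sum>l<H2. c (H1 + l) *\<^sub>R v0 (H1 + l))"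
      unfolding m_def by (rule sum_split)
    also have "(\<Sum>i<H1. c i *\<^sub>R v0 i) = (\<Sum>i<H1. c i *\<^sub>R e i)"
      by (rule sum.cong) (simp_all add: v0_def)
    also have "(\<Sum>l<H2. c (H1 + l) *\<^sub>R v0 (H1 + l)) = (\<Sum>l<H2. c (H1 + l) *\<^sub>R LT (z l))"
      by (rule sum.cong) (simp_all add: v0_def)
    also have "\<dots> = (\<Sum>l<H2. \<Sum>k\<in>UNIV. (c (H1 + l) * z l $ k) *\<^sub>R G P k t1)"
      by (simp add: LT_def scaleR_sum_right)
    also have "\<dots> = (\<Sum>k\<in>UNIV. \<Sum>l<H2. (c (H1 + l) * z l $ k) *\<^sub>R G P k t1)"
      by (rule sum.swap)
    also have "\<dots> = (\<Sum>k\<in>UNIV. (\<Sum>l<H2. c (H1 + l) * z l $ k) *\<^sub>R G P k t1)"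
      by (simp add: scaleR_sum_left)
    finally have "(\<Sum>i<H1. c i *\<^sub>R e i) + (\<Sum>k\<in>UNIV. (\<Sum>l<H2. c (H1 + l) * z l $ k) *\<^sub>R G P k t1) = 0"
      using s by simp
    from comb[OF rs ws(4) H1b assms(1) this]
    have A: "\<forall>i<H1. c i = 0" and B: "\<forall>k. (\<Sum>l<H2. c (H1 + l) * z l $ k) = 0" by auto
    have "(\<Sum>l<H2. c (H1 + l) *\<^sub>R z l) = 0" using B by (simp add: vec_eq_iff sum_component)
    then have C: "c (H1 + l) = 0" if "l < H2" for l
      using indep_famD[OF zi, where c="\<lambda>l. c (H1 + l)"] that by blast
    show "c j = 0"
    proof (cases "j < H1")
      case True then show ?thesis using A by simp
    next
      case False
      then have "j = H1 + (j - H1)" "j - H1 < H2" using j by (auto simp: m_def)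
      then show ?thesis using C[of "j - H1"] by simp
    qed
  qed
  have md: "m \<le> CARD('d)" using indep_fam_le_dim[OF v0i, of UNIV] by simp
  define y where "y j = (if j < H1 then 0 else x (j - H1))" for j
  define vmu where "vmu \<mu> j = v0 j + \<mu> *\<^sub>R y j" for \<mu> :: real and j
  define g where "g \<mu> = det (gram m v0 (vmu \<mu>))" for \<mu>
  have "vmu 0 = v0" by (simp add: vmu_def fun_eq_iff)
  then have g0: "g 0 \<noteq> 0" using gram_nz[OF v0i md] by (simp add: g_def)
  have ent: "isCont (\<lambda>\<mu>. gram m v0 (vmu \<mu>) $ i $ k) 0" for i k
    by (cases "enum_idx i < m \<and> enum_idx k < m") (auto simp: gram_def vmu_def intro!: continuous_intros)
  have gc: "isCont g 0" unfolding g_def det_def by (intro continuous_intros ent)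
  obtain \<mu> where mu: "\<mu> \<noteq> 0" "g \<mu> \<noteq> 0"
  proof -
    have "g \<midarrow>0\<rightarrow> g 0" using gc isCont_def by blast
    from LIM_D[OF this, of "\<bar>g 0\<bar>"] g0 obtain s where
      s: "s > 0" "\<forall>x. x \<noteq> 0 \<and> norm (x - 0) < s \<longrightarrow> norm (g x - g 0) < \<bar>g 0\<bar>" by auto
    then have "norm (g (s/2) - g 0) < \<bar>g 0\<bar>" by auto
    then have "g (s/2) \<noteq> 0" by auto
    then show ?thesis using that[of "s/2"] s(1) by simp
  qed
  have vmi: "indep_fam m (vmu \<mu>)" using gram_indep[OF _ md] mu(2) g_def by metis
  define t0 where "t0 = (1/\<mu>) *\<^sub>R t1"
  define vv where "vv j = (if j < H1 then (e j, 0) else (x (j - H1), z (j - H1)))" for j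
  have vvV: "\<And>j. j < m \<Longrightarrow> vv j \<in> V" using eV xV by (auto simp: vv_def m_def)
  have rvv: "rho P t0 (vv j) = (if j < H1 then 1 else 1/\<mu>) *\<^sub>R vmu \<mu> j" for j
  proof (cases "j < H1")
    case True then show ?thesis by (simp add: vv_def vmu_def v0_def y_def rho_S1)
  next
    case False
    have "rho P t0 (vv j) = x (j - H1) + (1/\<mu>) *\<^sub>R LT (z (j - H1))"
      using False by (simp add: vv_def t0_def rho_scale LT_def)
    also have "\<dots> = (1/\<mu>) *\<^sub>R (LT (z (j - H1)) + \<mu> *\<^sub>R x (j - H1))"
      using mu(1) by (simp add: algebra_simps)
    finally show ?thesis using False by (simp add: vmu_def v0_def y_def)
  qed
  define w0 where "w0 j = rho P t0 (vv j)" for j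
  have w0i: "indep_fam m w0"
  proof -
    have "indep_fam m (\<lambda>j. (if j < H1 then 1 else 1/\<mu>) *\<^sub>R vmu \<mu> j)"
      by (rule indep_fam_scale[OF vmi]) (use mu in auto)
    moreover have "w0 = (\<lambda>j. (if j < H1 then 1 else 1/\<mu>) *\<^sub>R vmu \<mu> j)"
      by (simp add: fun_eq_iff w0_def rvv)
    ultimately show ?thesis by simp
  qed
  define F where "F t = det (gram m w0 (\<lambda>j. rho P t (vv j)))" for t
  have "(\<lambda>j. rho P t0 (vv j)) = w0" by (simp add: w0_def fun_eq_iff)
  then have Ft0: "F t0 \<noteq> 0" unfolding F_def using gram_nz[OF w0i md] by simp
  have FP: "ispoly H2 F"
  proof -
    have "ispoly (m - H1) (\<lambda>t. det (gram m w0 (\<lambda>j. (\<lambda>j t. rho P t (vv j)) j t)))"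
    proof (rule ispoly_det_gram[OF md])
      fix j t assume "j < H1"
      then show "rho P t (vv j) = rho P 0 (vv j)" by (simp add: vv_def rho_S1)
    next
      fix j and yy :: "real^'d" assume "H1 \<le> j" "j < m"
      then show "ispoly 1 (\<lambda>t. yy \<bullet> rho P t (vv j))"
        using ispoly_rho[of yy P "x (j - H1)" "z (j - H1)"] by (simp add: vv_def)
    qed
    then show ?thesis by (simp add: F_def[abs_def] m_def)
  qed
  then obtain c where Fc: "F = poly_eval H2 c" by (auto simp: ispoly_def)
  show ?thesis
  proof (intro exI[of _ c] conjI allI impI)
    show "\<exists>\<alpha>\<in>monomials_upto H2. c \<alpha> \<noteq> 0"
    proof (rule ccontr)
      assume "\<not> (\<exists>\<alpha>\<in>monomials_upto H2. c \<alpha> \<noteq> 0)"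
      then have "poly_eval H2 c t0 = 0" by (simp add: poly_eval_def)
      with Ft0 Fc show False by simp
    qed
  next
    fix t assume "poly_eval H2 c t \<noteq> 0"
    then have "F t \<noteq> 0" using Fc by simp
    then have "indep_fam m (\<lambda>j. rho P t (vv j))" unfolding F_def by (rule gram_indep[OF _ md])
    then have "m \<le> dim (orth_proj (tangent_space P t) ` V)" by (rule key_dim) (rule vvV)
    then show "H1 + H2 \<le> dim (orth_proj (tangent_space P t) ` V)" by (simp add: m_def)
  qed
qed

end
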